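(* Let $n\ge 2$ be an integer and $A\subseteq L_n$. (i) If $B\subseteq L_n\setminus A$ has cardinality continuum, then $B$ is not $z$-embedded in $(X_n,\tau(A))$. (ii) If $B\subseteq L_n\setminus A$ is a closed uncountable subset of $(L_n,\tau_E|_{L_n})$, then $L_n$ is not $z$-embedded in $(X_n,\tau(A))$.
   Context: For $\overline{x},\overline{a}\in\mathbb R^n$ let $|\overline{x}-\overline{a}|$ be the Euclidean distance and $B(\overline{a},\epsilon)=\{\overline{x}\in\mathbb R^n:|\overline{x}-\overline{a}|<\epsilon\}$. Let $P_n=\{\overline{x}\in\mathbb R^n: x_n>0\}$, $L_n=\{\overline{x}\in\mathbb R^n: x_n=0\}$, $X_n=P_n\cup L_n$, and let $\tau_E$ denote the Euclidean topology on $X_n$. For $\overline{a}\in L_n$ and $\epsilon>0$ put $\overline{a(\epsilon)}=(a_1,\dots,a_{n-1},\epsilon)$ and $\tilde B(\overline{a},\epsilon)=\{\overline{a}\}\cup B(\overline{a(\epsilon)},\epsilon)$. For $A\subseteq L_n$, the topology $\tau(A)$ on $X_n$ is generated by the local bases: at $\overline{a}\in P_n$, the sets $B(\overline{a},\epsilon)$ with $0<\epsilon<a_n$; at $\overline{a}\in A$, the sets $B(\overline{a},\epsilon)\cap X_n$ with $\epsilon>0$; at $\overline{a}\in L_n\setminus A$, the sets $\tilde B(\overline{a},\epsilon)$ with $\epsilon>0$. A subset $Y$ of a space $X$ is $z$-embedded in $X$ if every zero set of $Y$ is the trace on $Y$ of some zero set of $X$. *)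

theory Defs
  imports "HOL-Analysis.Analysis"
begin

text \<open>We model R^n as R^(n-1) x R, i.e. points are pairs (y, t) with y :: real^'m and
  t the last coordinate x_n; n = CARD('m) + 1, so n >= 2 automatically and every n >= 2 arises.
  The product norm on real^'m x real is the Euclidean norm on R^n.\<close>

definition Pn :: "((real^'m) \<times> real) set" where
  "Pn = {x. snd x > 0}"

definition Ln :: "((real^'m) \<times> real) set" where
  "Ln = {x. snd x = 0}"

definition Xn :: "((real^'m) \<times> real) set" where
  "Xn = Pn \<union> Ln"

definition tilde_ball :: "(real^'m) \<times> real \<Rightarrow> real \<Rightarrow> ((real^'m) \<times> real) set" where
  "tilde_ball a e = insert a (ball (fst a, e) e)"

definition basic_nbhd :: "((real^'m) \<times> real) set \<Rightarrow> (real^'m) \<times> real \<Rightarrow> ((real^'m) \<times> real) set \<Rightarrow> bool" where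
  "basic_nbhd A p V \<longleftrightarrow>
     (p \<in> Pn \<and> (\<exists>e. 0 < e \<and> e < snd p \<and> V = ball p e)) \<or>
     (p \<in> A \<and> (\<exists>e>0. V = ball p e \<inter> Xn)) \<or>
     (p \<in> Ln - A \<and> (\<exists>e>0. V = tilde_ball p e))"

definition tauA :: "((real^'m) \<times> real) set \<Rightarrow> ((real^'m) \<times> real) topology" where
  "tauA A = topology (\<lambda>U. U \<subseteq> Xn \<and> (\<forall>p\<in>U. \<exists>V. basic_nbhd A p V \<and> V \<subseteq> U))"

definition zero_set_of :: "'a topology \<Rightarrow> 'a set \<Rightarrow> bool" where
  "zero_set_of X Z \<longleftrightarrow> (\<exists>f. continuous_map X euclideanreal f \<and> Z = {x \<in> topspace X. f x = 0})"

definition z_embedded :: "'a set \<Rightarrow> 'a topology \<Rightarrow> bool" where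
  "z_embedded Y X \<longleftrightarrow>
     (\<forall>Z. zero_set_of (subtopology X Y) Z \<longrightarrow> (\<exists>Z'. zero_set_of X Z' \<and> Z = Z' \<inter> Y))"

end

theory Submission
  imports Defs
begin


lemma PnLn_disj: "x \<in> Pn \<Longrightarrow> x \<notin> Ln" by (auto simp: Pn_def Ln_def)

lemma ball_up_Pn: "q \<in> ball (y, e) e \<Longrightarrow> snd q > 0"
proof -
  assume "q \<in> ball (y, e) e"
  hence "dist (snd (y,e)) (snd q) < e" using dist_snd_le[of "(y,e)" q] by simp
  thus ?thesis by (simp add: dist_real_def)
qed

lemma ball_up_nested: "0 < e1 \<Longrightarrow> e1 \<le> e2 \<Longrightarrow> ball (y, e1) e1 \<subseteq> ball (y, e2) e2"
proof
  fix q assume "0 < e1" "e1 \<le> e2" "q \<in> ball (y, e1) e1"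
  have "dist (y,e2) q \<le> dist (y,e2) (y,e1) + dist (y,e1) q" by (rule dist_triangle)
  also have "dist (y,e2) (y,e1) = e2 - e1" using \<open>e1 \<le> e2\<close> by (simp add: dist_Pair_Pair dist_real_def)
  finally show "q \<in> ball (y, e2) e2" using \<open>q \<in> ball (y, e1) e1\<close> by simp
qed

lemma tilde_sub: "p \<in> Ln \<Longrightarrow> 0 < e \<Longrightarrow> tilde_ball p e \<subseteq> ball p (2*e)"
proof
  fix q assume p: "p \<in> Ln" "0 < e" "q \<in> tilde_ball p e"
  show "q \<in> ball p (2*e)"
  proof (cases "q = p")
    case True thus ?thesis using p by simp
  next
    case False
    hence q: "q \<in> ball (fst p, e) e" using p by (simp add: tilde_ball_def)
    have "dist p q \<le> dist p (fst p, e) + dist (fst p, e) q" by (rule dist_triangle)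
    also have "dist p (fst p, e) = e" using p
      by (cases p) (simp add: Ln_def dist_Pair_Pair dist_real_def)
    finally show ?thesis using q by simp
  qed
qed

lemma tilde_Xn: "p \<in> Ln \<Longrightarrow> tilde_ball p e \<subseteq> Xn"
  using ball_up_Pn by (auto simp: tilde_ball_def Xn_def Pn_def)

lemma tilde_Ln: "p \<in> Ln \<Longrightarrow> tilde_ball p e \<inter> Ln = {p}"
proof -
  assume "p \<in> Ln"
  have "q \<notin> Ln" if "q \<in> ball (fst p, e) e" for q using ball_up_Pn[OF that] by (simp add: Ln_def)
  thus ?thesis using \<open>p \<in> Ln\<close> by (auto simp: tilde_ball_def)
qed

lemma basic_Pn: "A \<subseteq> Ln \<Longrightarrow> basic_nbhd A p V \<Longrightarrow> p \<in> Pn \<Longrightarrow> \<exists>e>0. e < snd p \<and> V = ball p e"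
  unfolding basic_nbhd_def by (auto dest: PnLn_disj)

lemma basic_A: "A \<subseteq> Ln \<Longrightarrow> basic_nbhd A p V \<Longrightarrow> p \<in> A \<Longrightarrow> \<exists>e>0. V = ball p e \<inter> Xn"
  unfolding basic_nbhd_def by (auto dest: PnLn_disj)

lemma basic_L: "A \<subseteq> Ln \<Longrightarrow> basic_nbhd A p V \<Longrightarrow> p \<notin> Pn \<Longrightarrow> p \<notin> A \<Longrightarrow> p \<in> Ln - A \<and> (\<exists>e>0. V = tilde_ball p e)"
  unfolding basic_nbhd_def by auto

lemma basic_inter:
  assumes "A \<subseteq> Ln" "basic_nbhd A p V1" "basic_nbhd A p V2"
  shows "\<exists>V. basic_nbhd A p V \<and> V \<subseteq> V1 \<inter> V2"
proof (cases "p \<in> Pn")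
  case True
  obtain e1 where e1: "0 < e1" "e1 < snd p" "V1 = ball p e1" using basic_Pn[OF assms(1,2) True] by blast
  obtain e2 where e2: "0 < e2" "e2 < snd p" "V2 = ball p e2" using basic_Pn[OF assms(1,3) True] by blast
  have "basic_nbhd A p (ball p (min e1 e2))" using True e1 e2 unfolding basic_nbhd_def
    by (intro disjI1 conjI exI[of _ "min e1 e2"]) auto
  thus ?thesis using e1 e2 by auto
next
  case False
  show ?thesis
  proof (cases "p \<in> A")
    case True
    obtain e1 where e1: "0 < e1" "V1 = ball p e1 \<inter> Xn" using basic_A[OF assms(1,2) True] by blast
    obtain e2 where e2: "0 < e2" "V2 = ball p e2 \<inter> Xn" using basic_A[OF assms(1,3) True] by blast
    have "basic_nbhd A p (ball p (min e1 e2) \<inter> Xn)" using True e1 e2 unfolding basic_nbhd_def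
      by (intro disjI2 disjI1 conjI exI[of _ "min e1 e2"]) auto
    thus ?thesis using e1 e2 by auto
  next
    case nA: False
    obtain e1 where e1: "0 < e1" "V1 = tilde_ball p e1" and pL: "p \<in> Ln - A"
      using basic_L[OF assms(1,2) False nA] by blast
    obtain e2 where e2: "0 < e2" "V2 = tilde_ball p e2" using basic_L[OF assms(1,3) False nA] by blast
    have s1: "tilde_ball p (min e1 e2) \<subseteq> tilde_ball p e1" unfolding tilde_ball_def
      by (rule insert_mono, rule ball_up_nested) (use e1 e2 in auto)
    have s2: "tilde_ball p (min e1 e2) \<subseteq> tilde_ball p e2" unfolding tilde_ball_def
      by (rule insert_mono, rule ball_up_nested) (use e1 e2 in auto)
    have "basic_nbhd A p (tilde_ball p (min e1 e2))" using pL e1 e2 unfolding basic_nbhd_def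
      by (intro disjI2 conjI exI[of _ "min e1 e2"]) auto
    moreover have "tilde_ball p (min e1 e2) \<subseteq> tilde_ball p e1 \<inter> tilde_ball p e2" using s1 s2 by blast
    ultimately show ?thesis using e1 e2 by blast
  qed
qed

lemma istop: assumes "A \<subseteq> Ln"
  shows "istopology (\<lambda>U. U \<subseteq> Xn \<and> (\<forall>p\<in>U. \<exists>V. basic_nbhd A p V \<and> V \<subseteq> U))"
proof -
  let ?L = "\<lambda>U. U \<subseteq> Xn \<and> (\<forall>p\<in>U. \<exists>V. basic_nbhd A p V \<and> V \<subseteq> U)"
  have 1: "?L (S \<inter> T)" if S: "?L S" and T: "?L T" for S T
  proof (intro conjI ballI)
    show "S \<inter> T \<subseteq> Xn" using S by blast
    fix p assume "p \<in> S \<inter> T"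
    hence "p \<in> S" "p \<in> T" by auto
    obtain V1 where V1: "basic_nbhd A p V1" "V1 \<subseteq> S" using S \<open>p \<in> S\<close> by metis
    obtain V2 where V2: "basic_nbhd A p V2" "V2 \<subseteq> T" using T \<open>p \<in> T\<close> by metis
    obtain V where "basic_nbhd A p V" "V \<subseteq> V1 \<inter> V2" using basic_inter[OF assms V1(1) V2(1)] by metis
    thus "\<exists>V. basic_nbhd A p V \<and> V \<subseteq> S \<inter> T" using V1(2) V2(2) by blast
  qed
  have 2: "?L (\<Union> K)" if K: "\<forall>S\<in>K. ?L S" for K
  proof (intro conjI ballI)
    show "\<Union> K \<subseteq> Xn" using K by blast
    fix p assume "p \<in> \<Union> K"
    then obtain S where "S \<in> K" "p \<in> S" by blast
    then obtain V where "basic_nbhd A p V" "V \<subseteq> S" using K by metis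
    thus "\<exists>V. basic_nbhd A p V \<and> V \<subseteq> \<Union> K" using \<open>S \<in> K\<close> by blast
  qed
  show ?thesis unfolding istopology_def using 1 2 by blast
qed

lemma open_tauA: assumes "A \<subseteq> Ln"
  shows "openin (tauA A) U \<longleftrightarrow> U \<subseteq> Xn \<and> (\<forall>p\<in>U. \<exists>V. basic_nbhd A p V \<and> V \<subseteq> U)"
  unfolding tauA_def using istop[OF assms] by simp

lemma Pn_nbhd: assumes "q \<in> Pn" "open W" "q \<in> W"
  shows "\<exists>V. basic_nbhd A q V \<and> V \<subseteq> W"
proof -
  obtain r where r: "r > 0" "ball q r \<subseteq> W" using assms open_contains_ball by blast
  have "snd q > 0" using assms by (simp add: Pn_def)
  hence "basic_nbhd A q (ball q (min r (snd q / 2)))" using r assms(1) unfolding basic_nbhd_def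
    by (intro disjI1 conjI exI[of _ "min r (snd q / 2)"]) auto
  thus ?thesis using r by (intro exI[of _ "ball q (min r (snd q / 2))"]) auto
qed

lemma ball_Pn: "p \<in> Pn \<Longrightarrow> e < snd p \<Longrightarrow> ball p e \<subseteq> Pn"
proof
  fix q assume "p \<in> Pn" "e < snd p" "q \<in> ball p e"
  hence "dist (snd p) (snd q) < e" using dist_snd_le[of p q] by simp
  thus "q \<in> Pn" using \<open>e < snd p\<close> by (auto simp: Pn_def dist_real_def)
qed

lemma Xn_cases: fixes A :: "((real^'m) \<times> real) set" shows "q \<in> Xn \<Longrightarrow> q \<in> Pn \<or> q \<in> A \<or> q \<in> Ln - A"
  by (auto simp: Xn_def)

lemma basic_PnI: "p \<in> Pn \<Longrightarrow> 0 < e \<Longrightarrow> e < snd p \<Longrightarrow> basic_nbhd A p (ball p e)"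
  unfolding basic_nbhd_def by blast
lemma basic_AI: "p \<in> A \<Longrightarrow> 0 < e \<Longrightarrow> basic_nbhd A p (ball p e \<inter> Xn)"
  unfolding basic_nbhd_def by blast
lemma basic_LI: "p \<in> Ln - A \<Longrightarrow> 0 < e \<Longrightarrow> basic_nbhd A p (tilde_ball p e)"
  unfolding basic_nbhd_def by blast

lemma ball_in_ball: "q \<in> ball p e \<Longrightarrow> r \<le> e - dist p q \<Longrightarrow> ball q r \<subseteq> ball p e"
proof
  fix z assume "q \<in> ball p e" "r \<le> e - dist p q" "z \<in> ball q r"
  have "dist p z \<le> dist p q + dist q z" by (rule dist_triangle)
  thus "z \<in> ball p e" using \<open>r \<le> e - dist p q\<close> \<open>z \<in> ball q r\<close> by simp
qed

lemma basic_open: assumes "A \<subseteq> Ln" "basic_nbhd A p V" shows "openin (tauA A) V"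
  unfolding open_tauA[OF assms(1)]
proof -
  consider (P) e where "p \<in> Pn" "0 < e" "e < snd p" "V = ball p e"
    | (A) e where "p \<in> A" "0 < e" "V = ball p e \<inter> Xn"
    | (L) e where "p \<in> Ln - A" "0 < e" "V = tilde_ball p e"
    using assms(2) unfolding basic_nbhd_def by blast
  thus "V \<subseteq> Xn \<and> (\<forall>p\<in>V. \<exists>V'. basic_nbhd A p V' \<and> V' \<subseteq> V)"
  proof cases
    case P
    hence sub: "V \<subseteq> Pn" using ball_Pn by blast
    show ?thesis
    proof (intro conjI ballI)
      show "V \<subseteq> Xn" using sub by (auto simp: Xn_def)
      fix q assume "q \<in> V"
      thus "\<exists>V'. basic_nbhd A q V' \<and> V' \<subseteq> V" using Pn_nbhd[of q "ball p e"] sub P by auto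
    qed
  next
    case A
    show ?thesis
    proof (intro conjI ballI)
      show "V \<subseteq> Xn" using A by auto
      fix q assume q: "q \<in> V"
      hence qb: "q \<in> ball p e" "q \<in> Xn" using A by auto
      consider "q \<in> Pn" | "q \<in> A" | "q \<in> Ln - A" using Xn_cases qb(2) by blast
      thus "\<exists>V'. basic_nbhd A q V' \<and> V' \<subseteq> V"
      proof cases
        case 1
        hence sq: "snd q > 0" by (simp add: Pn_def)
        define r where "r = min (e - dist p q) (snd q / 2)"
        have "r > 0" using qb sq by (simp add: r_def)
        have "ball q r \<subseteq> ball p e" by (rule ball_in_ball[OF qb(1)]) (simp add: r_def)
        moreover have "ball q r \<subseteq> Pn" by (rule ball_Pn[OF 1]) (use sq in \<open>simp add: r_def min_less_iff_disj\<close>)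
        moreover have "basic_nbhd A q (ball q r)" by (rule basic_PnI[OF 1 \<open>r>0\<close>]) (use sq in \<open>simp add: r_def min_less_iff_disj\<close>)
        ultimately show ?thesis using A by (intro exI[of _ "ball q r"]) (auto simp: Xn_def)
      next
        case 2
        define r where "r = e - dist p q"
        have "r > 0" using qb by (simp add: r_def)
        have "ball q r \<subseteq> ball p e" by (rule ball_in_ball[OF qb(1)]) (simp add: r_def)
        moreover have "basic_nbhd A q (ball q r \<inter> Xn)" by (rule basic_AI[OF 2 \<open>r>0\<close>])
        ultimately show ?thesis using A by (intro exI[of _ "ball q r \<inter> Xn"]) auto
      next
        case 3
        define r where "r = (e - dist p q)/2"
        have "r > 0" using qb by (simp add: r_def)
        have "ball q (2*r) \<subseteq> ball p e" by (rule ball_in_ball[OF qb(1)]) (simp add: r_def)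
        hence "tilde_ball q r \<subseteq> V" using tilde_sub[of q r] tilde_Xn[of q r] 3 \<open>r>0\<close> A by auto
        moreover have "basic_nbhd A q (tilde_ball q r)" by (rule basic_LI[OF 3 \<open>r>0\<close>])
        ultimately show ?thesis by blast
      qed
    qed
  next
    case L
    show ?thesis
    proof (intro conjI ballI)
      show "V \<subseteq> Xn" using L tilde_Xn by blast
      fix q assume q: "q \<in> V"
      show "\<exists>V'. basic_nbhd A q V' \<and> V' \<subseteq> V"
      proof (cases "q = p")
        case True thus ?thesis using L basic_LI by blast
      next
        case False
        hence qb: "q \<in> ball (fst p, e) e" using q L by (simp add: tilde_ball_def)
        hence "q \<in> Pn" using ball_up_Pn by (simp add: Pn_def)
        then obtain V' where "basic_nbhd A q V'" "V' \<subseteq> ball (fst p, e) e" using Pn_nbhd[of q] qb by blast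
        moreover have "ball (fst p, e) e \<subseteq> V" using L by (auto simp: tilde_ball_def)
        ultimately show ?thesis by blast
      qed
    qed
  qed
qed

lemma topspace_tauA: assumes "A \<subseteq> Ln" shows "topspace (tauA A) = Xn"
proof
  show "topspace (tauA A) \<subseteq> Xn" using open_tauA[OF assms, of "topspace (tauA A)"] by simp
  have "openin (tauA A) Xn"
    unfolding open_tauA[OF assms]
  proof (intro conjI ballI)
    fix p :: "(real^'a) \<times> real" assume "p \<in> Xn"
    then consider "p \<in> Pn" | "p \<in> A" | "p \<in> Ln - A" using Xn_cases by blast
    thus "\<exists>V. basic_nbhd A p V \<and> V \<subseteq> Xn"
    proof cases
      case 1
      hence "snd p > 0" by (simp add: Pn_def)
      hence "basic_nbhd A p (ball p (snd p/2))" "ball p (snd p/2) \<subseteq> Pn"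
        using basic_PnI[OF 1] ball_Pn[OF 1] by auto
      thus ?thesis by (auto simp: Xn_def)
    next
      case 2 thus ?thesis using basic_AI[OF 2, of 1] by auto
    next
      case 3 thus ?thesis using tilde_Xn[of p 1] basic_LI[OF 3, of 1] by auto
    qed
  qed simp
  thus "Xn \<subseteq> topspace (tauA A)" by (simp add: openin_subset)
qed



lemma basic_has_ball: assumes "A \<subseteq> Ln" "basic_nbhd A p V" shows "\<exists>c r. 0 < r \<and> ball c r \<subseteq> V"
proof -
  consider (P) e where "p \<in> Pn" "0 < e" "e < snd p" "V = ball p e"
    | (A) e where "p \<in> A" "0 < e" "V = ball p e \<inter> Xn"
    | (L) e where "p \<in> Ln - A" "0 < e" "V = tilde_ball p e"
    using assms(2) unfolding basic_nbhd_def by blast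
  thus ?thesis
  proof cases
    case P thus ?thesis by blast
  next
    case A
    have pL: "snd p = 0" using A assms(1) by (auto simp: Ln_def)
    have "ball (fst p, e/2) (e/2) \<subseteq> ball p e"
    proof
      fix z assume z: "z \<in> ball (fst p, e/2) (e/2)"
      have "dist p z \<le> dist p (fst p, e/2) + dist (fst p, e/2) z" by (rule dist_triangle)
      also have "dist p (fst p, e/2) = e/2" using pL A by (cases p) (simp add: dist_Pair_Pair dist_real_def)
      finally show "z \<in> ball p e" using z by simp
    qed
    moreover have "ball (fst p, e/2) (e/2) \<subseteq> Xn"
    proof
      fix z assume "z \<in> ball (fst p, e/2) (e/2)"
      hence "snd z > 0" by (rule ball_up_Pn)
      thus "z \<in> Xn" by (simp add: Xn_def Pn_def)
    qed
    ultimately show ?thesis using A by (intro exI[of _ "(fst p, e/2)"] exI[of _ "e/2"]) auto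
  next
    case L thus ?thesis unfolding tilde_ball_def by (intro exI[of _ "(fst p, e)"] exI[of _ e]) auto
  qed
qed

lemma agree:
  fixes A :: "((real^'m) \<times> real) set"
  assumes A: "A \<subseteq> Ln" and f: "continuous_map (tauA A) euclideanreal f"
    and g: "continuous_map (tauA A) euclideanreal g"
    and D: "\<And>W. open W \<Longrightarrow> W \<noteq> {} \<Longrightarrow> \<exists>d\<in>D. d \<in> W"
    and fg: "\<And>d. d \<in> D \<Longrightarrow> d \<in> Xn \<Longrightarrow> f d = g d"
    and x: "x \<in> Xn"
  shows "f x = g x"
proof (rule ccontr)
  assume ne: "f x \<noteq> g x"
  let ?U = "{y \<in> topspace (tauA A). f y - g y \<in> -{0}}"
  have "openin (tauA A) ?U"
    by (rule openin_continuous_map_preimage[OF continuous_map_diff[OF f g]]) auto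
  moreover have "x \<in> ?U" using x ne topspace_tauA[OF A] by auto
  ultimately obtain V where V: "basic_nbhd A x V" "V \<subseteq> ?U" unfolding open_tauA[OF A] by blast
  obtain c r where "0 < r" "ball c r \<subseteq> V" using basic_has_ball[OF A V(1)] by blast
  moreover obtain d where "d \<in> D" "d \<in> ball c r" using D[of "ball c r"] \<open>0 < r\<close> by auto
  ultimately have "d \<in> ?U" using V by blast
  thus False using fg[OF \<open>d \<in> D\<close>] topspace_tauA[OF A] by auto
qed

lemma fun_lepoll_real: "\<exists>h :: (nat \<Rightarrow> real) \<Rightarrow> real. inj h"
proof -
  obtain b :: "nat set \<Rightarrow> real" where b: "bij b"
    using nat_sets_eqpoll_reals unfolding eqpoll_def by blast
  define g where "g = inv b"
  have ginj: "inj g" unfolding g_def using b bij_imp_bij_inv bij_is_inj by blast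
  define \<psi> where "\<psi> F = {prod_encode (i,j) | i j. j \<in> g (F i)}" for F :: "nat \<Rightarrow> real"
  have mem: "prod_encode (i,j) \<in> \<psi> F \<longleftrightarrow> j \<in> g (F i)" for F i j
    unfolding \<psi>_def using inj_prod_encode[of UNIV] by (auto simp: inj_on_def)
  have "inj \<psi>"
  proof (rule injI)
    fix F1 F2 assume eq: "\<psi> F1 = \<psi> F2"
    show "F1 = F2"
    proof
      fix i
      have "g (F1 i) = g (F2 i)" using mem[of i _ F1] mem[of i _ F2] eq by blast
      thus "F1 i = F2 i" using ginj by (simp add: inj_eq)
    qed
  qed
  hence "inj (b \<circ> \<psi>)" using b bij_is_inj inj_compose by blast
  thus ?thesis by blast
qed

lemma count_contra:
  fixes A :: "((real^'m) \<times> real) set" and T :: "((real^'m) \<times> real) set"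
  assumes A: "A \<subseteq> Ln" and RT: "(UNIV::real set) \<lesssim> T"
    and Z: "\<And>S. S \<subseteq> T \<Longrightarrow> \<exists>Z. zero_set_of (tauA A) Z \<and> S = Z \<inter> T"
  shows False
proof -
  obtain D :: "((real^'m) \<times> real) set" where Dc: "countable D"
    and D: "\<And>W. open W \<Longrightarrow> W \<noteq> {} \<Longrightarrow> \<exists>d\<in>D. d \<in> W"
    by (rule countable_dense_setE) blast
  define E where "E = D \<inter> Xn"
  obtain d0 where "d0 \<in> D" "d0 \<in> ball (0::real^'m, 1) 1"
    using D[of "ball (0::real^'m, 1) 1"] by auto
  hence "d0 \<in> E" using ball_up_Pn[of d0 0 1] by (auto simp: E_def Xn_def Pn_def)
  hence Ene: "E \<noteq> {}" by auto
  have Ec: "countable E" using Dc by (simp add: E_def)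
  define d where "d = from_nat_into E"
  have rd: "range d = E" unfolding d_def using Ene Ec by simp
  define zf where "zf Z = (SOME f. continuous_map (tauA A) euclideanreal f \<and> Z = {x \<in> topspace (tauA A). f x = 0})" for Z
  define zc where "zc S = (SOME Z. zero_set_of (tauA A) Z \<and> S = Z \<inter> T)" for S
  have zc: "zero_set_of (tauA A) (zc S) \<and> S = zc S \<inter> T" if "S \<subseteq> T" for S
    unfolding zc_def using Z[OF that] by (rule someI_ex)
  have zf: "continuous_map (tauA A) euclideanreal (zf Z) \<and> Z = {x \<in> topspace (tauA A). zf Z x = 0}"
    if "zero_set_of (tauA A) Z" for Z
    unfolding zf_def using that unfolding zero_set_of_def by (rule someI_ex)
  define \<phi> where "\<phi> S = (\<lambda>i. zf (zc S) (d i))" for S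
  have injphi: "inj_on \<phi> (Pow T)"
  proof (rule inj_onI)
    fix S1 S2 assume S1: "S1 \<in> Pow T" and S2: "S2 \<in> Pow T" and eq: "\<phi> S1 = \<phi> S2"
    have z1: "zero_set_of (tauA A) (zc S1)" "S1 = zc S1 \<inter> T" using zc S1 by auto
    have z2: "zero_set_of (tauA A) (zc S2)" "S2 = zc S2 \<inter> T" using zc S2 by auto
    note f1 = zf[OF z1(1)] and f2 = zf[OF z2(1)]
    have ag: "zf (zc S1) x = zf (zc S2) x" if "x \<in> Xn" for x
    proof (rule agree[OF A _ _ D _ that])
      show "continuous_map (tauA A) euclideanreal (zf (zc S1))" using f1 by blast
      show "continuous_map (tauA A) euclideanreal (zf (zc S2))" using f2 by blast
      fix y assume "y \<in> D" "y \<in> Xn"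
      hence "y \<in> range d" using rd by (simp add: E_def)
      then obtain i where "y = d i" by blast
      thus "zf (zc S1) y = zf (zc S2) y" using fun_cong[OF eq, of i] by (simp add: \<phi>_def)
    qed
    have "zc S1 = {x \<in> Xn. zf (zc S1) x = 0}" using f1 topspace_tauA[OF A] by simp
    also have "\<dots> = {x \<in> Xn. zf (zc S2) x = 0}" using ag by auto
    also have "\<dots> = zc S2" using f2 topspace_tauA[OF A] by simp
    finally have "zc S1 = zc S2" .
    thus "S1 = S2" using z1 z2 by simp
  qed
  obtain h :: "(nat \<Rightarrow> real) \<Rightarrow> real" where h: "inj h" using fun_lepoll_real by blast
  obtain e :: "real \<Rightarrow> (real^'m) \<times> real" where e: "inj e" "range e \<subseteq> T"
    using RT unfolding lepoll_def by blast
  have "inj_on (\<lambda>X. h (\<phi> (e ` X))) (Pow (UNIV::real set))"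
  proof (rule inj_onI)
    fix X Y :: "real set" assume "h (\<phi> (e ` X)) = h (\<phi> (e ` Y))"
    hence "\<phi> (e ` X) = \<phi> (e ` Y)" using h by (simp add: inj_eq)
    hence "e ` X = e ` Y" using injphi e(2) unfolding inj_on_def by blast
    thus "X = Y" using e(1) by (simp add: inj_image_eq_iff)
  qed
  hence "Pow (UNIV::real set) \<lesssim> (UNIV::real set)" unfolding lepoll_def by blast
  thus False using lesspoll_Pow_self[of "UNIV::real set"] lepoll_antisym eqpoll_sym
    unfolding lesspoll_def by blast
qed



lemma perfect_kernel:
  fixes B :: "'a::{metric_space, second_countable_topology} set"
  assumes cB: "closed B" and uB: "uncountable B"
  shows "\<exists>P \<subseteq> B. P \<noteq> {} \<and> euclidean derived_set_of P = P"
proof -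
  define P where "P = {x. \<forall>e>0. uncountable (ball x e \<inter> B)}"
  have Pmem: "x \<in> P \<longleftrightarrow> (\<forall>e>0. uncountable (ball x e \<inter> B))" for x unfolding P_def by simp
  obtain \<B> :: "'a set set" where Bc: "countable \<B>" and Bo: "\<And>C. C \<in> \<B> \<Longrightarrow> open C"
    and Bb: "\<And>S. open S \<Longrightarrow> \<exists>U. U \<subseteq> \<B> \<and> S = \<Union>U"
    by (rule univ_second_countable) blast
  define \<C> where "\<C> = {C \<in> \<B>. countable (C \<inter> B)}"
  have sub: "B - P \<subseteq> (\<Union>C\<in>\<C>. C \<inter> B)"
  proof
    fix x assume x: "x \<in> B - P"
    hence "\<not> (\<forall>e>0. uncountable (ball x e \<inter> B))" using Pmem by blast
    then obtain e where e: "e > 0" "countable (ball x e \<inter> B)" by blast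
    obtain U where U: "U \<subseteq> \<B>" "ball x e = \<Union>U" using Bb[of "ball x e"] by auto
    have "x \<in> \<Union>U" using U(2) e(1) by (metis centre_in_ball)
    then obtain C where C: "C \<in> U" "x \<in> C" by blast
    have "C \<subseteq> ball x e" using U C by blast
    hence "C \<inter> B \<subseteq> ball x e \<inter> B" by blast
    hence "countable (C \<inter> B)" using e(2) by (rule countable_subset)
    thus "x \<in> (\<Union>C\<in>\<C>. C \<inter> B)" using C U x unfolding \<C>_def by blast
  qed
  have cC: "countable \<C>" using Bc countable_subset[of \<C> \<B>] by (auto simp: \<C>_def)
  have "countable (\<Union>C\<in>\<C>. C \<inter> B)" using cC by (rule countable_UN) (simp add: \<C>_def)
  hence cnt: "countable (B - P)" using sub by (rule countable_subset[rotated])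
  have PB: "P \<subseteq> B"
  proof
    fix x assume x: "x \<in> P"
    show "x \<in> B"
    proof (rule ccontr)
      assume "x \<notin> B"
      have "open (-B)" using cB by (simp add: open_Compl)
      then obtain e where "e > 0" "ball x e \<subseteq> -B" using \<open>x \<notin> B\<close> open_contains_ball_eq by blast
      hence "ball x e \<inter> B = {}" by blast
      thus False using x \<open>e > 0\<close> Pmem countable_empty by metis
    qed
  qed
  have Pne: "P \<noteq> {}" using cnt uB by (metis Diff_empty)
  have "euclidean derived_set_of P = P"
  proof (intro set_eqI iffI)
    fix x assume x: "x \<in> euclidean derived_set_of P"
    show "x \<in> P" unfolding Pmem
    proof (intro allI impI)
      fix e :: real assume "e > 0"
      have "x \<in> ball x (e/2) \<and> openin euclidean (ball x (e/2))" using \<open>e>0\<close> by simp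
      then obtain y where y: "y \<noteq> x" "y \<in> P" "y \<in> ball x (e/2)"
        using x unfolding in_derived_set_of by blast
      have "ball y (e/2) \<subseteq> ball x e" 
      proof (rule ball_in_ball)
        have "dist x y < e/2" using y(3) by simp
        moreover have "dist x y \<ge> 0" by simp
        ultimately show "y \<in> ball x e" "e/2 \<le> e - dist x y" unfolding mem_ball by linarith+
      qed
      hence sub2: "ball y (e/2) \<inter> B \<subseteq> ball x e \<inter> B" by blast
      have "e/2 > 0" using \<open>e>0\<close> by simp
      hence unc: "uncountable (ball y (e/2) \<inter> B)" using y(2) Pmem by blast
      show "uncountable (ball x e \<inter> B)"
      proof
        assume "countable (ball x e \<inter> B)"
        hence "countable (ball y (e/2) \<inter> B)" using sub2 by (rule countable_subset[rotated])
        thus False using unc by simp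
      qed
    qed
  next
    fix x assume x: "x \<in> P"
    show "x \<in> euclidean derived_set_of P" unfolding in_derived_set_of
    proof (intro conjI allI impI)
      show "x \<in> topspace euclidean" by simp
      fix T assume T: "x \<in> T \<and> openin euclidean T"
      hence "open T" by simp
      then obtain e where e: "e > 0" "ball x e \<subseteq> T" using open_contains_ball T by blast
      have "ball x e \<inter> B \<subseteq> (ball x e \<inter> P) \<union> (B - P)" by blast
      moreover have "uncountable (ball x e \<inter> B)" using x e(1) Pmem by blast
      ultimately have "uncountable (ball x e \<inter> P)" using cnt by (metis countable_Un countable_subset)
      hence "uncountable (ball x e \<inter> P - {x})" using countable_insert[of "ball x e \<inter> P - {x}" x]
        by (metis insert_Diff_single countable_subset subset_insertI)
      hence "ball x e \<inter> P - {x} \<noteq> {}" by (metis countable_empty)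
      then obtain y where "y \<in> ball x e \<inter> P - {x}" by blast
      thus "\<exists>y. y \<noteq> x \<and> y \<in> P \<and> y \<in> T" using e by blast
    qed
  qed
  thus ?thesis using PB Pne by blast
qed

lemma disc_open:
  fixes A :: "((real^'m) \<times> real) set"
  assumes A: "A \<subseteq> Ln" and W: "W \<subseteq> Ln - A"
  shows "\<exists>U. openin (tauA A) U \<and> U \<inter> Ln = W"
proof -
  define U where "U = (\<Union>b\<in>W. tilde_ball b 1)"
  have "openin (tauA A) U" unfolding U_def
  proof (rule openin_Union)
    fix S assume "S \<in> (\<lambda>b. tilde_ball b 1) ` W"
    then obtain b where b: "b \<in> W" "S = tilde_ball b 1" by blast
    have "b \<in> Ln - A" using b W by blast
    thus "openin (tauA A) S" using b(2) basic_open[OF A basic_LI[of b A 1]] by simp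
  qed
  moreover have "U \<inter> Ln = W"
  proof
    show "U \<inter> Ln \<subseteq> W"
    proof
      fix y assume "y \<in> U \<inter> Ln"
      then obtain b where b: "b \<in> W" "y \<in> tilde_ball b 1" "y \<in> Ln" unfolding U_def by blast
      have "b \<in> Ln" using b W by blast
      hence "y = b" using tilde_Ln[of b 1] b by blast
      thus "y \<in> W" using b by simp
    qed
    show "W \<subseteq> U \<inter> Ln"
    proof
      fix b assume "b \<in> W"
      thus "b \<in> U \<inter> Ln" using W unfolding U_def tilde_ball_def by blast
    qed
  qed
  ultimately show ?thesis by blast
qed

lemma part1:
  fixes A :: "((real^'m) \<times> real) set"
  assumes A: "A \<subseteq> Ln" and B: "B \<subseteq> Ln - A" and BR: "B \<approx> (UNIV :: real set)"
  shows "\<not> z_embedded B (tauA A)"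
proof
  assume z: "z_embedded B (tauA A)"
  have BX: "B \<subseteq> Xn" using B by (auto simp: Xn_def)
  have top: "topspace (subtopology (tauA A) B) = B"
    unfolding topspace_subtopology topspace_tauA[OF A] using BX by blast
  have op: "openin (subtopology (tauA A) B) P" if P: "P \<subseteq> B" for P
  proof -
    have "P \<subseteq> Ln - A" using P B by blast
    then obtain U where U: "openin (tauA A) U" "U \<inter> Ln = P" using disc_open[OF A] by blast
    have "P = U \<inter> B" using U(2) P B by blast
    thus ?thesis unfolding openin_subtopology using U(1) by blast
  qed
  have Zf: "\<exists>Z. zero_set_of (tauA A) Z \<and> S = Z \<inter> B" if S: "S \<subseteq> B" for S
  proof -
    define f where "f x = (if x \<in> S then 0 else 1::real)" for x
    have "continuous_map (subtopology (tauA A) B) euclideanreal f"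
      unfolding continuous_map_def top
    proof (intro conjI allI impI)
      show "f \<in> B \<rightarrow> topspace euclideanreal" by simp
      fix U :: "real set"
      show "openin (subtopology (tauA A) B) {x \<in> B. f x \<in> U}" by (rule op) blast
    qed
    moreover have "S = {x \<in> topspace (subtopology (tauA A) B). f x = 0}"
      unfolding top f_def using S by auto
    ultimately have "zero_set_of (subtopology (tauA A) B) S" unfolding zero_set_of_def by blast
    thus ?thesis using z unfolding z_embedded_def by blast
  qed
  have RT: "(UNIV::real set) \<lesssim> B" using eqpoll_imp_lepoll[OF eqpoll_sym[OF BR]] .
  show False by (rule count_contra[OF A RT Zf])
qed



lemma closed_Ln: "closed (Ln :: ((real^'m) \<times> real) set)"
proof -
  have "(Ln :: ((real^'m) \<times> real) set) = snd -` {0::real}" by (auto simp: Ln_def)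
  moreover have "closed (snd -` {0::real} :: ((real^'m) \<times> real) set)"
    by (rule continuous_closed_vimage) (auto intro: continuous_intros)
  ultimately show ?thesis by simp
qed

lemma part2:
  fixes A :: "((real^'m) \<times> real) set"
  assumes A: "A \<subseteq> Ln" and B: "B \<subseteq> Ln - A" and cl: "closedin (subtopology euclidean Ln) B"
    and uB: "uncountable B"
  shows "\<not> z_embedded Ln (tauA A)"
proof
  assume z: "z_embedded Ln (tauA A)"
  have cB: "closed B" using closedin_closed_trans[OF cl closed_Ln] .
  obtain P where P: "P \<subseteq> B" "P \<noteq> {}" "euclidean derived_set_of P = P"
    using perfect_kernel[OF cB uB] by blast
  have "(UNIV::real set) \<lesssim> P"
    by (rule lepoll_perfect_set[OF _ P(3) P(2)]) (simp add: completely_metrizable_space_euclidean)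
  hence RT: "(UNIV::real set) \<lesssim> B" using subset_imp_lepoll[OF P(1)] by (rule lepoll_trans)
  have Bne: "B \<noteq> {}" using uB by auto
  have LX: "Ln \<subseteq> Xn" by (auto simp: Xn_def)
  have top: "topspace (subtopology (tauA A) Ln) = Ln"
    unfolding topspace_subtopology topspace_tauA[OF A] using LX by blast
  have Zf: "\<exists>Z. zero_set_of (tauA A) Z \<and> S = Z \<inter> B" if S: "S \<subseteq> B" for S
  proof -
    define f where "f x = (if x \<in> S then 0 else if x \<in> B then 1 else infdist x B)" for x
    have cont: "continuous_map (subtopology (tauA A) Ln) euclideanreal f"
      unfolding continuous_map_def top
    proof (intro conjI allI impI)
      show "f \<in> Ln \<rightarrow> topspace euclideanreal" by simp
      fix U :: "real set" assume "openin euclideanreal U"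
      hence oU: "open U" by simp
      define Q where "Q = {x \<in> Ln. f x \<in> U}"
      have "Q - A \<subseteq> Ln - A" unfolding Q_def by blast
      then obtain U1 where U1: "openin (tauA A) U1" "U1 \<inter> Ln = Q - A" using disc_open[OF A] by blast
      define Ob where "Ob = -B \<inter> (\<lambda>y. infdist y B) -` U"
      have "open ((\<lambda>y. infdist y B) -` U)"
        by (rule continuous_open_vimage[OF oU]) (intro continuous_infdist continuous_ident)
      hence oOb: "open Ob" unfolding Ob_def using cB by (intro open_Int open_Compl)
      have ex: "\<exists>r>0. ball a r \<subseteq> Ob" if a: "a \<in> Q \<inter> A" for a
      proof -
        have "a \<notin> B" using a B by blast
        moreover have "a \<notin> S" using \<open>a \<notin> B\<close> S by blast
        ultimately have "infdist a B \<in> U" using a unfolding Q_def f_def by simp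
        hence "a \<in> Ob" unfolding Ob_def using \<open>a \<notin> B\<close> by simp
        thus ?thesis using open_contains_ball_eq[OF oOb] by blast
      qed
      define ra where "ra a = (SOME r. r > 0 \<and> ball a r \<subseteq> Ob)" for a
      have ra: "ra a > 0 \<and> ball a (ra a) \<subseteq> Ob" if "a \<in> Q \<inter> A" for a
        unfolding ra_def using ex[OF that] by (rule someI_ex)
      define U2 where "U2 = (\<Union>a\<in>Q \<inter> A. ball a (ra a) \<inter> Xn)"
      have oU2: "openin (tauA A) U2" unfolding U2_def
      proof (rule openin_Union)
        fix S' assume "S' \<in> (\<lambda>a. ball a (ra a) \<inter> Xn) ` (Q \<inter> A)"
        then obtain a where a: "a \<in> Q \<inter> A" "S' = ball a (ra a) \<inter> Xn" by blast
        have "basic_nbhd A a (ball a (ra a) \<inter> Xn)" using a(1) ra[OF a(1)] basic_AI by blast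
        thus "openin (tauA A) S'" using a(2) basic_open[OF A] by simp
      qed
      have U2L: "U2 \<inter> Ln \<subseteq> Q"
      proof
        fix y assume "y \<in> U2 \<inter> Ln"
        then obtain a where a: "a \<in> Q \<inter> A" "y \<in> ball a (ra a)" "y \<in> Ln" unfolding U2_def by blast
        hence "y \<in> Ob" using ra[OF a(1)] by blast
        hence "y \<notin> B" "infdist y B \<in> U" unfolding Ob_def by auto
        moreover have "y \<notin> S" using \<open>y \<notin> B\<close> S by blast
        ultimately show "y \<in> Q" unfolding Q_def f_def using a(3) by simp
      qed
      have QA: "Q \<inter> A \<subseteq> U2"
      proof
        fix a assume a: "a \<in> Q \<inter> A"
        have "a \<in> Xn" using a unfolding Q_def Xn_def by blast
        have "a \<in> ball a (ra a) \<inter> Xn" using ra[OF a] \<open>a \<in> Xn\<close> by simp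
        thus "a \<in> U2" unfolding U2_def using a by blast
      qed
      have "Q = (U1 \<union> U2) \<inter> Ln"
      proof
        show "Q \<subseteq> (U1 \<union> U2) \<inter> Ln"
        proof
          fix x assume x: "x \<in> Q"
          hence xL: "x \<in> Ln" unfolding Q_def by blast
          show "x \<in> (U1 \<union> U2) \<inter> Ln"
          proof (cases "x \<in> A")
            case True thus ?thesis using x xL QA by blast
          next
            case False thus ?thesis using x xL U1(2) by blast
          qed
        qed
        show "(U1 \<union> U2) \<inter> Ln \<subseteq> Q" using U1(2) U2L by blast
      qed
      moreover have "openin (tauA A) (U1 \<union> U2)" using U1(1) oU2 by (rule openin_Un)
      ultimately show "openin (subtopology (tauA A) Ln) {x \<in> Ln. f x \<in> U}"
        unfolding openin_subtopology Q_def by blast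
    qed
    have "S = {x \<in> topspace (subtopology (tauA A) Ln). f x = 0}"
    proof -
      have "f x \<noteq> 0" if "x \<in> Ln" "x \<notin> S" for x
      proof (cases "x \<in> B")
        case True thus ?thesis using that unfolding f_def by simp
      next
        case False
        have "infdist x B > 0" using infdist_pos_not_in_closed[OF cB Bne False] .
        thus ?thesis using that False unfolding f_def by simp
      qed
      moreover have "S \<subseteq> Ln" using S B by blast
      moreover have "f x = 0" if "x \<in> S" for x using that unfolding f_def by simp
      ultimately show ?thesis unfolding top by blast
    qed
    hence "zero_set_of (subtopology (tauA A) Ln) S" using cont unfolding zero_set_of_def by blast
    then obtain Z where Z: "zero_set_of (tauA A) Z" "S = Z \<inter> Ln" using z unfolding z_embedded_def by blast
    have "S = Z \<inter> B" using Z(2) S B by blast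
    thus ?thesis using Z(1) by blast
  qed
  show False by (rule count_contra[OF A RT Zf])
qed


theorem mainTheorem9:
  fixes A :: "((real^'m) \<times> real) set"
  assumes "A \<subseteq> Ln"
  shows "(\<forall>B. B \<subseteq> Ln - A \<and> B \<approx> (UNIV :: real set) \<longrightarrow> \<not> z_embedded B (tauA A)) \<and>
         (\<forall>B. B \<subseteq> Ln - A \<and> closedin (subtopology euclidean Ln) B \<and> uncountable B
              \<longrightarrow> \<not> z_embedded Ln (tauA A))"
proof (intro conjI allI impI)
  fix B :: "((real^'m) \<times> real) set"
  assume h: "B \<subseteq> Ln - A \<and> B \<approx> (UNIV :: real set)"
  show "\<not> z_embedded B (tauA A)" using part1[OF assms] h by blast
next
  fix B :: "((real^'m) \<times> real) set"
  assume h: "B \<subseteq> Ln - A \<and> closedin (subtopology euclidean Ln) B \<and> uncountable B"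
  show "\<not> z_embedded Ln (tauA A)" using part2[OF assms] h by blast
qed

end
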